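(* Let $K$ be a field of characteristic zero, $R=K[x,y,z]$ with the standard grading, and let $a,b,c,\beta,\gamma$ be integers with $a\geq c\geq 2$, $1\leq \beta\leq b-1$ and $\max\{1,b-a+1\}\leq \gamma\leq \min\{b-1,c-1\}$. Consider the ideal $$I=(x^a,\ y^b-x^{b-\gamma}z^\gamma,\ z^c,\ x^{a-b+\gamma}y^{b-\beta},\ y^{b-\beta}z^{c-\gamma})\subset R.$$ Then $R/I$ has the weak Lefschetz property if one of the following conditions holds: (a) $a\geq 2b+c-6$; (b) $a\geq b+c-2$ and $1\leq \beta\leq a-b-c+5$.
   Context: A graded Artinian $K$-algebra $A=\bigoplus_i [A]_i$ has the weak Lefschetz property (WLP) if there exists a linear form $L\in[A]_1$ such that the multiplication map $\times L:[A]_i\to[A]_{i+1}$ has maximal rank (i.e. is injective or surjective) for every $i$. *)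

theory Defs
  imports Main "HOL-Library.Poly_Mapping" "HOL-Library.Product_Plus"
begin

text \<open>The polynomial ring R = K[x,y,z]: finitely supported maps from exponent
  triples (i,j,k) (standing for x^i y^j z^k) to coefficients in K.\<close>

type_synonym 'a poly3 = "(nat \<times> nat \<times> nat) \<Rightarrow>\<^sub>0 'a"

definition varX :: "'a::comm_ring_1 poly3" where "varX = Poly_Mapping.single (1,0,0) 1"
definition varY :: "'a::comm_ring_1 poly3" where "varY = Poly_Mapping.single (0,1,0) 1"
definition varZ :: "'a::comm_ring_1 poly3" where "varZ = Poly_Mapping.single (0,0,1) 1"

fun mdeg :: "nat \<times> nat \<times> nat \<Rightarrow> nat" where
  "mdeg (i,j,k) = i + j + k"

text \<open>f lies in the graded piece [R]_d (0 lies in every graded piece).\<close>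
definition homog :: "nat \<Rightarrow> 'a::comm_ring_1 poly3 \<Rightarrow> bool" where
  "homog d f \<longleftrightarrow> (\<forall>m\<in>Poly_Mapping.keys f. mdeg m = d)"

definition gen_ideal :: "'a::comm_ring_1 poly3 list \<Rightarrow> 'a poly3 set" where
  "gen_ideal gs = {(\<Sum>i<length gs. q i * gs ! i) | q. True}"

definition artinian_quot :: "'a::comm_ring_1 poly3 list \<Rightarrow> bool" where
  "artinian_quot gs \<longleftrightarrow> (\<exists>D. \<forall>d\<ge>D. \<forall>f. homog d f \<longrightarrow> f \<in> gen_ideal gs)"

definition mult_injective :: "'a::comm_ring_1 poly3 list \<Rightarrow> 'a poly3 \<Rightarrow> nat \<Rightarrow> bool" where
  "mult_injective gs L d \<longleftrightarrow>
     (\<forall>f. homog d f \<longrightarrow> L * f \<in> gen_ideal gs \<longrightarrow> f \<in> gen_ideal gs)"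

definition mult_surjective :: "'a::comm_ring_1 poly3 list \<Rightarrow> 'a poly3 \<Rightarrow> nat \<Rightarrow> bool" where
  "mult_surjective gs L d \<longleftrightarrow>
     (\<forall>g. homog (Suc d) g \<longrightarrow> (\<exists>f. homog d f \<and> g - L * f \<in> gen_ideal gs))"

text \<open>Weak Lefschetz property of the graded Artinian algebra R/I, I = (gs),
  gs homogeneous.  A linear form of A is the class of a linear form of R.\<close>
definition has_WLP :: "'a::comm_ring_1 poly3 list \<Rightarrow> bool" where
  "has_WLP gs \<longleftrightarrow> artinian_quot gs \<and>
     (\<exists>L. homog 1 L \<and> (\<forall>d. mult_injective gs L d \<or> mult_surjective gs L d))"

end

theory Submission
  imports Defs
begin


definition mon :: "nat \<times> nat \<times> nat \<Rightarrow> 'a::comm_ring_1 poly3" where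
  "mon m = Poly_Mapping.single m 1"

lemma zero3: "(0::nat\<times>nat\<times>nat) = (0,0,0)"
  by (simp add: zero_prod_def)

lemma mon_zero: "(mon (0,0,0) :: 'a::comm_ring_1 poly3) = 1"
  by (simp add: mon_def zero_prod_def[symmetric])

lemma mon_mult: "mon m * mon n = (mon (m + n) :: 'a::comm_ring_1 poly3)"
  by (simp add: mon_def mult_single)

lemma varX_pow: "(varX ^ n :: 'a::comm_ring_1 poly3) = mon (n,0,0)"
  by (induction n) (simp_all add: varX_def mon_def mult_single mon_zero[unfolded mon_def])

lemma varY_pow: "(varY ^ n :: 'a::comm_ring_1 poly3) = mon (0,n,0)"
  by (induction n) (simp_all add: varY_def mon_def mult_single mon_zero[unfolded mon_def])

lemma varZ_pow: "(varZ ^ n :: 'a::comm_ring_1 poly3) = mon (0,0,n)"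
  by (induction n) (simp_all add: varZ_def mon_def mult_single mon_zero[unfolded mon_def])

lemma keys_minus': "Poly_Mapping.keys (- (f::'a::ab_group_add poly3)) = Poly_Mapping.keys f"
  by (simp add: keys_minus)

lemma poly_expand: "(f::'a::comm_ring_1 poly3) = (\<Sum>m\<in>Poly_Mapping.keys f. Poly_Mapping.single m (Poly_Mapping.lookup f m))"
proof (rule poly_mapping_eqI)
  fix k
  show "Poly_Mapping.lookup f k = Poly_Mapping.lookup (\<Sum>m\<in>Poly_Mapping.keys f. Poly_Mapping.single m (Poly_Mapping.lookup f m)) k"
    by (simp add: lookup_sum lookup_single when_def in_keys_iff)
qed



lemma mdeg_eq: "mdeg m = fst m + fst (snd m) + snd (snd m)"
  by (cases m) auto

lemma mdeg_add: "mdeg (m + n) = mdeg m + mdeg n"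
  by (cases m; cases n) auto

lemma homog_zero[simp]: "homog d 0"
  by (simp add: homog_def)

lemma homog_add: "homog d f \<Longrightarrow> homog d g \<Longrightarrow> homog d (f + g)"
  unfolding homog_def
proof
  fix m assume "\<forall>m\<in>Poly_Mapping.keys f. mdeg m = d" "\<forall>m\<in>Poly_Mapping.keys g. mdeg m = d"
    "m \<in> Poly_Mapping.keys (f + g)"
  moreover have "m \<in> Poly_Mapping.keys f \<union> Poly_Mapping.keys g"
    using keys_add[of f g] \<open>m \<in> Poly_Mapping.keys (f + g)\<close> by (rule subsetD)
  ultimately show "mdeg m = d" by auto
qed

lemma homog_neg: "homog d f \<Longrightarrow> homog d (- f)"
  unfolding homog_def by (simp add: keys_minus)

lemma homog_diff: "homog d f \<Longrightarrow> homog d g \<Longrightarrow> homog d (f - g)"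
  using homog_add[of d f "- g"] homog_neg[of d g] by simp

lemma homog_single: "mdeg m = d \<Longrightarrow> homog d (Poly_Mapping.single m c)"
  by (simp add: homog_def)

lemma homog_mon: "mdeg m = d \<Longrightarrow> homog d (mon m)"
  by (simp add: mon_def homog_single)

lemma homog_mult: "homog d f \<Longrightarrow> homog e g \<Longrightarrow> homog (d + e) (f * g)"
  unfolding homog_def
proof
  fix m assume hf: "\<forall>m\<in>Poly_Mapping.keys f. mdeg m = d" and hg: "\<forall>m\<in>Poly_Mapping.keys g. mdeg m = e"
    and m: "m \<in> Poly_Mapping.keys (f * g)"
  then obtain p q where "m = p + q" "p \<in> Poly_Mapping.keys f" "q \<in> Poly_Mapping.keys g"
    using keys_mult[of f g] by blast
  moreover have "mdeg p = d" using hf \<open>p \<in> Poly_Mapping.keys f\<close> by blast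
  moreover have "mdeg q = e" using hg \<open>q \<in> Poly_Mapping.keys g\<close> by blast
  ultimately show "mdeg m = d + e" by (simp only: mdeg_add)
qed

lemma homog_const: "homog 0 (Poly_Mapping.single (0,0,0) c)"
  by (simp add: homog_def)

lemma homog_of_int: "homog 0 (of_int n :: 'a::comm_ring_1 poly3)"
proof -
  have "(of_int n :: 'a poly3) = Poly_Mapping.single 0 (of_int n)" by simp
  thus ?thesis by (simp add: homog_def zero_prod_def)
qed

lemma homog_sum: "finite S \<Longrightarrow> (\<And>i. i \<in> S \<Longrightarrow> homog d (f i)) \<Longrightarrow> homog d (sum f S)"
  by (induction S rule: finite_induct) (auto intro: homog_add)

lemma homog_pow: "homog 1 f \<Longrightarrow> homog n (f ^ n)"
proof (induction n)
  case 0 thus ?case by (simp add: homog_def zero_prod_def)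
next
  case (Suc n) thus ?case using homog_mult[of 1 f n "f^n"] by simp
qed

lemma homog_varX: "homog 1 varX" by (simp add: varX_def homog_def)
lemma homog_varY: "homog 1 varY" by (simp add: varY_def homog_def)
lemma homog_varZ: "homog 1 varZ" by (simp add: varZ_def homog_def)

lemma homog_expand_keys: "homog d f \<Longrightarrow> m \<in> Poly_Mapping.keys f \<Longrightarrow> mdeg m = d"
  by (simp add: homog_def)

lemma gi_zero: "0 \<in> gen_ideal gs"
  unfolding gen_ideal_def by (rule CollectI, rule exI[of _ "\<lambda>_. 0"]) simp

lemma gi_add: "f \<in> gen_ideal gs \<Longrightarrow> g \<in> gen_ideal gs \<Longrightarrow> f + g \<in> gen_ideal gs"
proof -
  assume "f \<in> gen_ideal gs" "g \<in> gen_ideal gs"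
  then obtain q r where "f = (\<Sum>i<length gs. q i * gs ! i)" "g = (\<Sum>i<length gs. r i * gs ! i)"
    unfolding gen_ideal_def by blast
  hence "f + g = (\<Sum>i<length gs. (q i + r i) * gs ! i)"
    by (simp add: sum.distrib distrib_right)
  thus ?thesis unfolding gen_ideal_def by (auto intro!: exI[of _ "\<lambda>i. q i + r i"])
qed

lemma gi_mult: "f \<in> gen_ideal gs \<Longrightarrow> r * f \<in> gen_ideal gs"
proof -
  assume "f \<in> gen_ideal gs"
  then obtain q where "f = (\<Sum>i<length gs. q i * gs ! i)"
    unfolding gen_ideal_def by blast
  hence "r * f = (\<Sum>i<length gs. (r * q i) * gs ! i)"
    by (simp add: sum_distrib_left mult.assoc)
  thus ?thesis unfolding gen_ideal_def by (auto intro!: exI[of _ "\<lambda>i. r * q i"])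
qed

lemma gi_neg: "f \<in> gen_ideal gs \<Longrightarrow> - f \<in> gen_ideal gs"
  using gi_mult[of f gs "-1"] by simp

lemma gi_diff: "f \<in> gen_ideal gs \<Longrightarrow> g \<in> gen_ideal gs \<Longrightarrow> f - g \<in> gen_ideal gs"
  using gi_add[of f gs "- g"] gi_neg[of g gs] by simp

lemma gi_gen: "i < length gs \<Longrightarrow> gs ! i \<in> gen_ideal gs"
proof -
  assume i: "i < length gs"
  have "(\<Sum>j<length gs. (if j = i then 1 else 0) * gs ! j) = (\<Sum>j<length gs. if j = i then gs ! j else 0)"
    by (rule sum.cong) auto
  also have "\<dots> = gs ! i" using i by simp
  finally have "(\<Sum>j<length gs. (if j = i then 1 else 0) * gs ! j) = gs ! i" .
  thus ?thesis unfolding gen_ideal_def by (auto intro!: exI[of _ "\<lambda>j. if j = i then 1 else 0"])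
qed

lemma gi_sum: "finite S \<Longrightarrow> (\<And>i. i \<in> S \<Longrightarrow> f i \<in> gen_ideal gs) \<Longrightarrow> sum f S \<in> gen_ideal gs"
  by (induction S rule: finite_induct) (auto intro: gi_add gi_zero)

lemma gi_mult_right: "f \<in> gen_ideal gs \<Longrightarrow> f * r \<in> gen_ideal gs"
  using gi_mult[of f gs r] by (simp add: mult.commute)

definition Sd :: "'a::comm_ring_1 poly3 list \<Rightarrow> 'a poly3 \<Rightarrow> nat \<Rightarrow> 'a poly3 \<Rightarrow> bool" where
  "Sd gs L d g \<longleftrightarrow> (\<exists>f. homog d f \<and> g - L * f \<in> gen_ideal gs)"

lemma Sd_ideal: "g \<in> gen_ideal gs \<Longrightarrow> Sd gs L d g"
  unfolding Sd_def by (rule exI[of _ 0]) simp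

lemma Sd_L: "homog d f \<Longrightarrow> Sd gs L d (L * f)"
  unfolding Sd_def by (rule exI[of _ f]) (simp add: gi_zero)

lemma Sd_add: "Sd gs L d g \<Longrightarrow> Sd gs L d h \<Longrightarrow> Sd gs L d (g + h)"
proof -
  assume "Sd gs L d g" "Sd gs L d h"
  then obtain f1 f2 where f: "homog d f1" "g - L * f1 \<in> gen_ideal gs" "homog d f2" "h - L * f2 \<in> gen_ideal gs"
    unfolding Sd_def by blast
  have e: "g + h - L * (f1 + f2) = (g - L * f1) + (h - L * f2)" by (simp add: algebra_simps)
  have "homog d (f1 + f2)" using f(1,3) by (rule homog_add)
  moreover have "g + h - L * (f1 + f2) \<in> gen_ideal gs" unfolding e using f(2,4) by (rule gi_add)
  ultimately show ?thesis unfolding Sd_def by blast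
qed

lemma Sd_mult: "Sd gs L d g \<Longrightarrow> homog e r \<Longrightarrow> Sd gs L (e + d) (r * g)"
proof -
  assume "Sd gs L d g" "homog e r"
  then obtain f where f: "homog d f" "g - L * f \<in> gen_ideal gs" unfolding Sd_def by blast
  have "r * g - L * (r * f) = r * (g - L * f)" by (simp add: algebra_simps)
  thus ?thesis unfolding Sd_def using f homog_mult[OF \<open>homog e r\<close> f(1)] gi_mult[OF f(2), of r]
    by (intro exI[of _ "r * f"]) simp
qed

lemma Sd_neg: "Sd gs L d g \<Longrightarrow> Sd gs L d (- g)"
  using Sd_mult[of gs L d g 0 "-1"] homog_of_int[of "-1"] by simp

lemma Sd_diff: "Sd gs L d g \<Longrightarrow> Sd gs L d h \<Longrightarrow> Sd gs L d (g - h)"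
  using Sd_add[of gs L d g "- h"] Sd_neg[of gs L d h] by simp

lemma Sd_zero: "Sd gs L d 0"
  by (rule Sd_ideal, rule gi_zero)

lemma Sd_sum: "finite S \<Longrightarrow> (\<And>i. i \<in> S \<Longrightarrow> Sd gs L d (f i)) \<Longrightarrow> Sd gs L d (sum f S)"
  by (induction S rule: finite_induct) (auto intro: Sd_add Sd_zero)

lemma Sd_const: "Sd gs L d g \<Longrightarrow> Sd gs L d (of_int n * g)"
  using Sd_mult[of gs L d g 0 "of_int n"] homog_of_int[of n] by simp

lemma Sd_single_const: "Sd gs L d g \<Longrightarrow> Sd gs L d (Poly_Mapping.single (0,0,0) c * g)"
  using Sd_mult[of gs L d g 0 "Poly_Mapping.single (0,0,0) c"] homog_const[of c] by simp



definition redm :: "nat \<Rightarrow> nat \<Rightarrow> nat \<times> nat \<times> nat \<Rightarrow> nat \<times> nat \<times> nat" where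
  "redm b g m = (case m of (i,j,k) \<Rightarrow> (i + (j div b) * (b - g), j mod b, k + (j div b) * g))"

definition okm :: "nat \<Rightarrow> nat \<Rightarrow> nat \<Rightarrow> nat \<Rightarrow> nat \<times> nat \<times> nat \<Rightarrow> bool" where
  "okm a b c g m = (case redm b g m of (i,j,k) \<Rightarrow> i < a \<and> k < c)"

definition rmon :: "nat \<Rightarrow> nat \<Rightarrow> nat \<Rightarrow> nat \<Rightarrow> nat \<times> nat \<times> nat \<Rightarrow> 'a::comm_ring_1 \<Rightarrow> 'a poly3" where
  "rmon a b c g m e = (if okm a b c g m then Poly_Mapping.single (redm b g m) e else 0)"

definition nf :: "nat \<Rightarrow> nat \<Rightarrow> nat \<Rightarrow> nat \<Rightarrow> 'a::comm_ring_1 poly3 \<Rightarrow> 'a poly3" where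
  "nf a b c g f = (\<Sum>m\<in>Poly_Mapping.keys f. rmon a b c g m (Poly_Mapping.lookup f m))"

lemma rmon_zero[simp]: "rmon a b c g m 0 = 0"
  by (simp add: rmon_def)

lemma rmon_add: "rmon a b c g m (x + y) = rmon a b c g m x + rmon a b c g m y"
  by (simp add: rmon_def single_add)

lemma nf_add: "nf a b c g (p + q) = nf a b c g p + nf a b c g q"
  unfolding nf_def by (rule setsum_keys_plus_distrib) (simp_all add: rmon_add)

lemma nf_zero[simp]: "nf a b c g 0 = 0"
  by (simp add: nf_def)

lemma nf_neg: "nf a b c g (- p) = - nf a b c g p"
proof -
  have "nf a b c g p + nf a b c g (- p) = 0" using nf_add[of a b c g p "- p"] by simp
  thus ?thesis by (rule minus_unique[symmetric])
qed

lemma nf_diff: "nf a b c g (p - q) = nf a b c g p - nf a b c g q"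
  using nf_add[of a b c g p "- q"] nf_neg[of a b c g q] by simp

lemma nf_sum: "finite S \<Longrightarrow> nf a b c g (sum f S) = (\<Sum>i\<in>S. nf a b c g (f i))"
  by (induction S rule: finite_induct) (simp_all add: nf_add)

lemma nf_single: "nf a b c g (Poly_Mapping.single m e) = rmon a b c g m e"
  by (cases "e = 0") (simp_all add: nf_def)

lemma redm_simp: "redm b g (i,j,k) = (i + (j div b) * (b - g), j mod b, k + (j div b) * g)"
  by (simp add: redm_def)

lemma okm_simp: "okm a b c g (i,j,k) = (i + (j div b) * (b - g) < a \<and> k + (j div b) * g < c)"
  by (simp add: okm_def redm_def)

lemma redm_add:
  assumes "0 < b"
  shows "redm b g (m + redm b g m') = redm b g (m + m')"
proof -
  obtain i j k where m: "m = (i,j,k)" by (cases m) auto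
  obtain i' j' k' where m': "m' = (i',j',k')" by (cases m') auto
  have e: "j + j' = (j + j' mod b) + j' div b * b" by simp
  have d: "(j + j') div b = (j + j' mod b) div b + j' div b"
  proof -
    have "(j + j') div b = ((j + j' mod b) + j' div b * b) div b"
      using arg_cong[OF e, of "\<lambda>x. x div b"] .
    also have "\<dots> = j' div b + (j + j' mod b) div b"
      using assms by (rule div_mult_self1[OF less_imp_neq[symmetric]])
    finally show ?thesis by simp
  qed
  have md: "(j + j') mod b = (j + j' mod b) mod b"
    by (simp add: mod_add_right_eq)
  show ?thesis unfolding m m' by (simp add: redm_simp d md add_mult_distrib)
qed

lemma okm_add:
  assumes "0 < b"
  shows "okm a b c g (m + redm b g m') = okm a b c g (m + m')"
  unfolding okm_def using redm_add[OF assms] by simp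

lemma not_okm_add:
  assumes "0 < b" "\<not> okm a b c g m'"
  shows "\<not> okm a b c g (m + m')"
proof -
  obtain i j k where m: "m = (i,j,k)" by (cases m) auto
  obtain i' j' k' where m': "m' = (i',j',k')" by (cases m') auto
  have "j' div b \<le> (j + j') div b" by (simp add: div_le_mono)
  hence h1: "j' div b * (b - g) \<le> (j + j') div b * (b - g)" and h2: "j' div b * g \<le> (j + j') div b * g"
    by (simp_all add: mult_le_mono1)
  have o: "\<not> (i' + j' div b * (b - g) < a \<and> k' + j' div b * g < c)"
    using assms(2) unfolding m' by (simp add: okm_simp)
  have "\<not> (i + i' + (j + j') div b * (b - g) < a \<and> k + k' + (j + j') div b * g < c)"
    using h1 h2 o by linarith
  thus ?thesis unfolding m m' by (simp add: okm_simp)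
qed

lemma nf_mono_mult:
  assumes "0 < b"
  shows "nf a b c g (Poly_Mapping.single m x * Poly_Mapping.single m' y) =
         nf a b c g (Poly_Mapping.single m x * nf a b c g (Poly_Mapping.single m' y))"
proof (cases "okm a b c g m'")
  case True
  thus ?thesis using okm_add[OF assms, of a c g m m'] redm_add[OF assms, of g m m']
    by (simp add: nf_single mult_single rmon_def)
next
  case False
  thus ?thesis using not_okm_add[OF assms False, of m]
    by (simp add: nf_single mult_single rmon_def)
qed

lemma nf_mult_nf:
  assumes "0 < b"
  shows "nf a b c g (p * q) = nf a b c g (p * nf a b c g q)"
proof -
  let ?N = "nf a b c g"
  let ?S = "\<lambda>f m. Poly_Mapping.single m (Poly_Mapping.lookup f m)"
  have p: "p = (\<Sum>m\<in>Poly_Mapping.keys p. ?S p m)" by (rule poly_expand)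
  have q: "q = (\<Sum>m\<in>Poly_Mapping.keys q. ?S q m)" by (rule poly_expand)
  have "?N (p * q) = ?N ((\<Sum>m\<in>Poly_Mapping.keys p. ?S p m) * (\<Sum>m'\<in>Poly_Mapping.keys q. ?S q m'))"
    using p q by simp
  also have "\<dots> = (\<Sum>m\<in>Poly_Mapping.keys p. \<Sum>m'\<in>Poly_Mapping.keys q. ?N (?S p m * ?S q m'))"
    by (simp add: sum_distrib_left sum_distrib_right nf_sum sum.swap[of _ "Poly_Mapping.keys q"])
  also have "\<dots> = (\<Sum>m\<in>Poly_Mapping.keys p. \<Sum>m'\<in>Poly_Mapping.keys q. ?N (?S p m * ?N (?S q m')))"
    by (intro sum.cong refl) (rule nf_mono_mult[OF assms])
  also have "\<dots> = ?N ((\<Sum>m\<in>Poly_Mapping.keys p. ?S p m) * ?N (\<Sum>m'\<in>Poly_Mapping.keys q. ?S q m'))"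
    by (simp add: sum_distrib_left sum_distrib_right nf_sum sum.swap[of _ "Poly_Mapping.keys q"])
  also have "\<dots> = ?N (p * ?N q)" using p q by simp
  finally show ?thesis .
qed

lemma mdeg_redm:
  assumes "g \<le> b"
  shows "mdeg (redm b g m) = mdeg m"
proof -
  obtain i j k where m: "m = (i,j,k)" by (cases m) auto
  have e: "j mod b + (j div b) * b = j" by simp
  have h: "(j div b) * (b - g) + (j div b) * g = (j div b) * b"
    using assms by (simp add: add_mult_distrib2[symmetric])
  have "mdeg (redm b g m) = i + (j div b) * (b - g) + j mod b + (k + (j div b) * g)"
    unfolding m by (simp add: redm_simp)
  moreover have "mdeg (i,j,k) = i + j + k" by simp
  ultimately show ?thesis unfolding m using e h by linarith
qed

lemma keys_nf:
  "Poly_Mapping.keys (nf a b c g f) \<subseteq> {redm b g m | m. m \<in> Poly_Mapping.keys f \<and> okm a b c g m}"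
proof
  fix n assume "n \<in> Poly_Mapping.keys (nf a b c g f)"
  hence "n \<in> (\<Union>m\<in>Poly_Mapping.keys f. Poly_Mapping.keys (rmon a b c g m (Poly_Mapping.lookup f m)))"
    unfolding nf_def using keys_sum[of "\<lambda>m. rmon a b c g m (Poly_Mapping.lookup f m)" "Poly_Mapping.keys f"]
    by (rule subsetD[rotated])
  then obtain m where "m \<in> Poly_Mapping.keys f" "n \<in> Poly_Mapping.keys (rmon a b c g m (Poly_Mapping.lookup f m))"
    by (rule UN_E)
  moreover from this(2) have "okm a b c g m \<and> n = redm b g m"
    by (auto simp: rmon_def split: if_splits)
  ultimately show "n \<in> {redm b g m | m. m \<in> Poly_Mapping.keys f \<and> okm a b c g m}"
    by blast
qed

lemma okm_box:
  assumes "0 < b" "okm a b c g m"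
  shows "fst (redm b g m) < a \<and> fst (snd (redm b g m)) < b \<and> snd (snd (redm b g m)) < c"
  using assms by (cases m) (simp add: okm_simp redm_simp)

lemma homog_nf:
  assumes "g \<le> b" "homog d f"
  shows "homog d (nf a b c g f)"
  unfolding homog_def
proof
  fix n assume "n \<in> Poly_Mapping.keys (nf a b c g f)"
  then obtain m where "n = redm b g m" "m \<in> Poly_Mapping.keys f" using keys_nf by blast
  thus "mdeg n = d" using assms mdeg_redm[OF assms(1), of m] unfolding homog_def by simp
qed



definition gens :: "nat \<Rightarrow> nat \<Rightarrow> nat \<Rightarrow> nat \<Rightarrow> nat \<Rightarrow> 'a::comm_ring_1 poly3 list" where
  "gens A B C BE G = [mon (A,0,0), mon (0,B,0) - mon (B-G,0,G), mon (0,0,C),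
                      mon (A+G-B, B-BE, 0), mon (0, B-BE, C-G)]"

lemma single_mult_mon: "Poly_Mapping.single m1 e * mon m0 = (Poly_Mapping.single (m1 + m0) e :: 'a::comm_ring_1 poly3)"
  by (simp add: mon_def mult_single)

lemma single_in_ideal:
  assumes "mon m0 \<in> gen_ideal gs" "m = m1 + m0"
  shows "Poly_Mapping.single m e \<in> gen_ideal (gs :: 'a::comm_ring_1 poly3 list)"
  using gi_mult[OF assms(1), of "Poly_Mapping.single m1 e"] assms(2) by (simp add: single_mult_mon)

context
  fixes A B C BE G :: nat
  assumes hBE: "0 < BE" "BE < B" and hG: "0 < G" "G < B" "G < C" and hA: "B < A + G"
begin

lemma gen0: "mon (A,0,0) \<in> gen_ideal (gens A B C BE G :: 'a::comm_ring_1 poly3 list)"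
  using gi_gen[of 0 "gens A B C BE G :: 'a poly3 list"] by (simp add: gens_def)
lemma gen1: "mon (0,B,0) - mon (B-G,0,G) \<in> gen_ideal (gens A B C BE G :: 'a::comm_ring_1 poly3 list)"
  using gi_gen[of 1 "gens A B C BE G :: 'a poly3 list"] by (simp add: gens_def)
lemma gen2: "mon (0,0,C) \<in> gen_ideal (gens A B C BE G :: 'a::comm_ring_1 poly3 list)"
  using gi_gen[of 2 "gens A B C BE G :: 'a poly3 list"] by (simp add: gens_def)
lemma gen3: "mon (A+G-B, B-BE, 0) \<in> gen_ideal (gens A B C BE G :: 'a::comm_ring_1 poly3 list)"
  using gi_gen[of 3 "gens A B C BE G :: 'a poly3 list"] by (simp add: gens_def numeral_eq_Suc)
lemma gen4: "mon (0, B-BE, C-G) \<in> gen_ideal (gens A B C BE G :: 'a::comm_ring_1 poly3 list)"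
  using gi_gen[of 4 "gens A B C BE G :: 'a poly3 list"] by (simp add: gens_def numeral_eq_Suc)

lemma single_in_I:
  assumes "A \<le> i \<or> C \<le> k \<or> (B - BE \<le> j \<and> (A + G - B \<le> i \<or> C - G \<le> k))"
  shows "Poly_Mapping.single (i,j,k) e \<in> gen_ideal (gens A B C BE G :: 'a::comm_ring_1 poly3 list)"
proof -
  consider "A \<le> i" | "C \<le> k" | "B - BE \<le> j" "A + G - B \<le> i" | "B - BE \<le> j" "C - G \<le> k"
    using assms by blast
  thus ?thesis
  proof cases
    case 1 thus ?thesis by (intro single_in_ideal[OF gen0, of _ "(i - A, j, k)"]) simp
  next
    case 2 thus ?thesis by (intro single_in_ideal[OF gen2, of _ "(i, j, k - C)"]) simp
  next
    case 3 thus ?thesis by (intro single_in_ideal[OF gen3, of _ "(i - (A+G-B), j - (B-BE), k)"]) simp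
  next
    case 4 thus ?thesis by (intro single_in_ideal[OF gen4, of _ "(i, j - (B-BE), k - (C-G))"]) simp
  qed
qed

lemma red_single:
  "Poly_Mapping.single (i,j,k) e - rmon A B C G (i,j,k) e \<in> gen_ideal (gens A B C BE G :: 'a::comm_ring_1 poly3 list)"
proof (induction j arbitrary: i k rule: less_induct)
  case (less j)
  show ?case
  proof (cases "j < B")
    case True
    hence r: "redm B G (i,j,k) = (i,j,k)" by (simp add: redm_simp)
    hence ok: "okm A B C G (i,j,k) = (i < A \<and> k < C)" by (simp add: okm_def)
    show ?thesis
    proof (cases "i < A \<and> k < C")
      case True
      thus ?thesis using r ok by (simp add: rmon_def gi_zero)
    next
      case False
      hence "rmon A B C G (i,j,k) e = 0" using ok by (auto simp: rmon_def)
      moreover have "Poly_Mapping.single (i,j,k) e \<in> gen_ideal (gens A B C BE G :: 'a poly3 list)"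
        using False by (intro single_in_I) auto
      ultimately show ?thesis by simp
    qed
  next
    case False
    have jd: "j div B = Suc ((j - B) div B)" using False hG by (simp add: le_div_geq)
    have jm: "j mod B = (j - B) mod B" using False by (simp add: le_mod_geq)
    have rr: "redm B G (i,j,k) = redm B G (i + (B - G), j - B, k + G)"
      by (simp add: redm_simp jd jm algebra_simps)
    hence rm: "rmon A B C G (i,j,k) e = rmon A B C G (i + (B - G), j - B, k + G) e"
      by (simp add: rmon_def okm_def)
    have s1: "Poly_Mapping.single (i,j,k) e - Poly_Mapping.single (i + (B - G), j - B, k + G) e
       = Poly_Mapping.single (i, j - B, k) e * (mon (0,B,0) - mon (B-G,0,G))"
      using False by (simp add: right_diff_distrib single_mult_mon)
    have "Poly_Mapping.single (i,j,k) e - Poly_Mapping.single (i + (B - G), j - B, k + G) e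
       \<in> gen_ideal (gens A B C BE G :: 'a poly3 list)"
      unfolding s1 by (rule gi_mult[OF gen1])
    moreover have "Poly_Mapping.single (i + (B - G), j - B, k + G) e - rmon A B C G (i + (B - G), j - B, k + G) e
       \<in> gen_ideal (gens A B C BE G :: 'a poly3 list)"
      using less.IH[of "j - B"] False hG by simp
    ultimately show ?thesis using gi_add rm by fastforce
  qed
qed

lemma nf_red:
  "f - nf A B C G f \<in> gen_ideal (gens A B C BE G :: 'a::comm_ring_1 poly3 list)"
proof -
  let ?S = "\<lambda>m. Poly_Mapping.single m (Poly_Mapping.lookup f m)"
  have "f - nf A B C G f = (\<Sum>m\<in>Poly_Mapping.keys f. ?S m - rmon A B C G m (Poly_Mapping.lookup f m))"
    by (subst (1) poly_expand) (simp add: nf_def sum_subtractf)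
  also have "\<dots> \<in> gen_ideal (gens A B C BE G)"
    by (rule gi_sum) (auto intro: red_single)
  finally show ?thesis .
qed


lemma nf_mon: "nf A B C G (mon m :: 'a::comm_ring_1 poly3) = rmon A B C G m 1"
  by (simp add: mon_def nf_single)

lemma BBE_div: "(B + BE) div B = 1" "(B + BE) mod B = BE"
  using hBE by (simp_all add: le_div_geq le_mod_geq)

lemma nf_gen_zero:
  assumes "i < length (gens A B C BE G :: 'a::comm_ring_1 poly3 list)"
  shows "nf A B C G (mon (0,BE,0) * (gens A B C BE G ! i) :: 'a poly3) = 0"
proof -
  have i5: "i < 5" using assms by (simp add: gens_def)
  have B0: "0 < B" using hBE by simp
  have d1: "BE div B = 0" "BE mod B = BE" using hBE by simp_all
  have "i = 0 \<or> i = 1 \<or> i = 2 \<or> i = 3 \<or> i = 4" using i5 by linarith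
  thus ?thesis
  proof (elim disjE)
    assume "i = 0" thus ?thesis using d1 by (simp add: gens_def mon_mult nf_mon rmon_def okm_simp)
  next
    assume "i = 1" thus ?thesis using d1 BBE_div hG
      by (simp add: gens_def mon_mult nf_mon rmon_def okm_simp redm_simp right_diff_distrib nf_diff add.commute)
  next
    assume "i = 2" thus ?thesis using d1 by (simp add: gens_def mon_mult nf_mon rmon_def okm_simp)
  next
    assume "i = 3" thus ?thesis using hBE hA hG B0 by (simp add: gens_def mon_mult nf_mon rmon_def okm_simp numeral_eq_Suc)
  next
    assume "i = 4" thus ?thesis using hBE hG B0 by (simp add: gens_def mon_mult nf_mon rmon_def okm_simp numeral_eq_Suc)
  qed
qed

lemma nf_I:
  assumes "f \<in> gen_ideal (gens A B C BE G :: 'a::comm_ring_1 poly3 list)"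
  shows "nf A B C G (mon (0,BE,0) * f) = 0"
proof -
  let ?gs = "gens A B C BE G :: 'a poly3 list"
  have B0: "0 < B" using hBE by simp
  obtain q where f: "f = (\<Sum>i<length ?gs. q i * ?gs ! i)" using assms unfolding gen_ideal_def by blast
  have "mon (0,BE,0) * f = (\<Sum>i<length ?gs. q i * (mon (0,BE,0) * ?gs ! i))"
    unfolding f by (simp add: sum_distrib_left algebra_simps)
  hence "nf A B C G (mon (0,BE,0) * f) = (\<Sum>i<length ?gs. nf A B C G (q i * (mon (0,BE,0) * ?gs ! i)))"
    by (simp add: nf_sum)
  also have "\<dots> = (\<Sum>i<length ?gs. nf A B C G (q i * nf A B C G (mon (0,BE,0) * ?gs ! i)))"
    by (intro sum.cong refl) (rule nf_mult_nf[OF B0])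
  also have "\<dots> = 0" by (simp add: nf_gen_zero)
  finally show ?thesis .
qed

definition tau :: "nat \<times> nat \<times> nat \<Rightarrow> nat \<times> nat \<times> nat" where
  "tau m = (case m of (i,j,k) \<Rightarrow> if j + BE < B then (i, j + BE, k) else (i + (B - G), j + BE - B, k + G))"

definition good :: "nat \<times> nat \<times> nat \<Rightarrow> bool" where
  "good m = (case m of (i,j,k) \<Rightarrow> i < A \<and> j < B \<and> k < C \<and> \<not> (B - BE \<le> j \<and> (A + G - B \<le> i \<or> C - G \<le> k)))"

lemma nf_Y_good:
  assumes "good m"
  shows "nf A B C G (mon (0,BE,0) * Poly_Mapping.single m e :: 'a::comm_ring_1 poly3) = Poly_Mapping.single (tau m) e"
proof -
  obtain i j k where m: "m = (i,j,k)" by (cases m) auto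
  have g: "i < A" "j < B" "k < C" "\<not> (B - BE \<le> j \<and> (A + G - B \<le> i \<or> C - G \<le> k))"
    using assms by (simp_all add: good_def m)
  have e: "mon (0,BE,0) * Poly_Mapping.single m e = (Poly_Mapping.single (i, j + BE, k) e :: 'a poly3)"
    by (simp add: mon_def mult_single m add.commute)
  show ?thesis
  proof (cases "j + BE < B")
    case True
    thus ?thesis using g unfolding e by (simp add: nf_single rmon_def okm_simp redm_simp tau_def m)
  next
    case False
    have d: "(j + BE) div B = 1" "(j + BE) mod B = j + BE - B"
      using False g hBE by (simp_all add: le_div_geq le_mod_geq)
    have "i + (B - G) < A" "k + G < C" using g False hG hA by auto
    thus ?thesis using False unfolding e by (simp add: nf_single rmon_def okm_simp redm_simp tau_def m d)
  qed
qed

lemma tau_inj: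
  assumes "good m" "good m'" "tau m = tau m'"
  shows "m = m'"
proof -
  obtain i j k where m: "m = (i,j,k)" by (cases m) auto
  obtain i' j' k' where m': "m' = (i',j',k')" by (cases m') auto
  show ?thesis using assms hBE hG unfolding m m' good_def tau_def by (auto split: if_splits)
qed

lemma nf_Y_bad:
  assumes "\<not> good m" "okm A B C G m0" "m = redm B G m0"
  shows "nf A B C G (mon (0,BE,0) * Poly_Mapping.single m e :: 'a::comm_ring_1 poly3) = 0"
proof -
  obtain i j k where m: "m = (i,j,k)" by (cases m) auto
  have "fst m < A \<and> fst (snd m) < B \<and> snd (snd m) < C" using okm_box[of B A C G m0] assms(2,3) hBE by simp
  hence "i < A \<and> j < B \<and> k < C" by (simp add: m)
  hence "B - BE \<le> j \<and> (A + G - B \<le> i \<or> C - G \<le> k)" using assms(1) by (simp add: good_def m)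
  hence "Poly_Mapping.single m e \<in> gen_ideal (gens A B C BE G :: 'a poly3 list)"
    unfolding m by (intro single_in_I) auto
  thus ?thesis by (rule nf_I)
qed

lemma nf_Y_zero_imp:
  assumes "nf A B C G (mon (0,BE,0) * f) = 0"
  shows "f \<in> gen_ideal (gens A B C BE G :: 'a::comm_ring_1 poly3 list)"
proof -
  let ?gs = "gens A B C BE G :: 'a poly3 list"
  let ?N = "nf A B C G"
  let ?Y = "mon (0,BE,0) :: 'a poly3"
  have B0: "0 < B" using hBE by simp
  define f0 where "f0 = ?N f"
  have kf0: "\<And>m. m \<in> Poly_Mapping.keys f0 \<Longrightarrow> \<exists>m0. okm A B C G m0 \<and> m = redm B G m0"
    using keys_nf[of A B C G f] unfolding f0_def by blast
  have z: "?N (?Y * f0) = 0" using assms nf_mult_nf[OF B0, of A C G ?Y f] by (simp add: f0_def)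
  have f0e: "f0 = (\<Sum>m\<in>Poly_Mapping.keys f0. Poly_Mapping.single m (Poly_Mapping.lookup f0 m))"
    by (rule poly_expand)
  have allbad: "\<not> good m0" if m0: "m0 \<in> Poly_Mapping.keys f0" for m0
  proof
    assume gm0: "good m0"
    have "?N (?Y * f0) = (\<Sum>m\<in>Poly_Mapping.keys f0. ?N (?Y * Poly_Mapping.single m (Poly_Mapping.lookup f0 m)))"
      by (subst f0e) (simp add: sum_distrib_left nf_sum)
    hence "0 = Poly_Mapping.lookup (\<Sum>m\<in>Poly_Mapping.keys f0. ?N (?Y * Poly_Mapping.single m (Poly_Mapping.lookup f0 m))) (tau m0)"
      using z by simp
    also have "\<dots> = (\<Sum>m\<in>Poly_Mapping.keys f0. Poly_Mapping.lookup (?N (?Y * Poly_Mapping.single m (Poly_Mapping.lookup f0 m))) (tau m0))"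
      by (simp add: lookup_sum)
    also have "\<dots> = (\<Sum>m\<in>Poly_Mapping.keys f0. if m = m0 then Poly_Mapping.lookup f0 m else 0)"
    proof (intro sum.cong refl)
      fix m assume mk: "m \<in> Poly_Mapping.keys f0"
      show "Poly_Mapping.lookup (?N (?Y * Poly_Mapping.single m (Poly_Mapping.lookup f0 m))) (tau m0) =
            (if m = m0 then Poly_Mapping.lookup f0 m else 0)"
      proof (cases "good m")
        case True
        thus ?thesis using tau_inj[OF True gm0] by (simp add: nf_Y_good lookup_single when_def)
      next
        case False
        obtain m1 where "okm A B C G m1" "m = redm B G m1" using kf0[OF mk] by blast
        hence "?N (?Y * Poly_Mapping.single m (Poly_Mapping.lookup f0 m)) = 0"
          using nf_Y_bad[OF False] by blast
        moreover have "m \<noteq> m0" using False gm0 by auto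
        ultimately show ?thesis by simp
      qed
    qed
    also have "\<dots> = Poly_Mapping.lookup f0 m0" using m0 by simp
    finally show False using m0 by (simp add: in_keys_iff)
  qed
  have "f0 \<in> gen_ideal ?gs"
  proof (subst f0e, rule gi_sum)
    fix m assume mk: "m \<in> Poly_Mapping.keys f0"
    obtain m1 where m1: "okm A B C G m1" "m = redm B G m1" using kf0[OF mk] by blast
    obtain i j k where m: "m = (i,j,k)" by (cases m) auto
    have "fst m < A \<and> fst (snd m) < B \<and> snd (snd m) < C" using okm_box[of B A C G m1] m1 hBE by simp
    hence "i < A \<and> j < B \<and> k < C" by (simp add: m)
    hence "B - BE \<le> j \<and> (A + G - B \<le> i \<or> C - G \<le> k)" using allbad[OF mk] by (simp add: good_def m)
    thus "Poly_Mapping.single m (Poly_Mapping.lookup f0 m) \<in> gen_ideal ?gs"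
      unfolding m by (intro single_in_I) auto
  qed simp
  moreover have "f - f0 \<in> gen_ideal ?gs" unfolding f0_def by (rule nf_red)
  ultimately show ?thesis using gi_add by fastforce
qed

end


context
  fixes A B C BE G :: nat
  assumes hBE: "0 < BE" "BE < B" and hG: "0 < G" "G < B" "G < C" and hA: "B < A + G"
begin

lemma top_lemma:
  assumes "i1 < A" "j1 < B" "k1 < C" "i < A" "j < B" "k < C"
    and "redm B G ((A - 1 - i1, B - 1 - j1, C - 1 - k1) + (i,j,k)) = (A - 1, B - 1, C - 1)"
  shows "(i,j,k) = (i1,j1,k1)"
proof (cases "B - 1 - j1 + j < B")
  case True
  hence "(B - 1 - j1 + j) div B = 0" "(B - 1 - j1 + j) mod B = B - 1 - j1 + j" by simp_all
  hence "A + i - Suc i1 = A - Suc 0 \<and> B + j - Suc j1 = B - Suc 0 \<and> C + k - Suc k1 = C - Suc 0"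
    using assms by (simp add: redm_simp)
  thus ?thesis using assms(1-6) by auto
next
  case False
  have lt: "B - 1 - j1 + j - B < B - 1" using assms False by linarith
  have "(B - 1 - j1 + j) mod B = B - 1 - j1 + j - B" using False lt by (simp add: le_mod_geq)
  moreover note lt
  ultimately show ?thesis using assms by (simp add: redm_simp)
qed

lemma nondeg:
  assumes "homog i f" "f \<notin> gen_ideal (gens A B C BE G :: 'a::comm_ring_1 poly3 list)"
  shows "\<exists>g. homog (A + B + C - 3 - BE - i) g \<and> f * g \<notin> gen_ideal (gens A B C BE G :: 'a poly3 list)"
proof -
  let ?gs = "gens A B C BE G :: 'a poly3 list"
  let ?N = "nf A B C G"
  let ?Y = "mon (0,BE,0) :: 'a poly3"
  have B0: "0 < B" using hBE by simp
  define F where "F = ?N (?Y * f)"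
  have "F \<noteq> 0" using nf_Y_zero_imp[OF hBE hG hA, of f] assms(2) by (auto simp: F_def)
  then obtain m0 where m0: "m0 \<in> Poly_Mapping.keys F" by (metis keys_eq_empty ex_in_conv)
  have kF: "\<And>m. m \<in> Poly_Mapping.keys F \<Longrightarrow> fst m < A \<and> fst (snd m) < B \<and> snd (snd m) < C"
  proof -
    fix m assume "m \<in> Poly_Mapping.keys F"
    then obtain m1 where "okm A B C G m1" "m = redm B G m1" using keys_nf[of A B C G "?Y * f"] unfolding F_def by blast
    thus "fst m < A \<and> fst (snd m) < B \<and> snd (snd m) < C" using okm_box[OF B0] by blast
  qed
  have hF: "homog (BE + i) F" unfolding F_def
    by (rule homog_nf) (use hG in simp, rule homog_mult[OF homog_mon assms(1)], simp)
  obtain i1 j1 k1 where m0e: "m0 = (i1,j1,k1)" by (cases m0) auto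
  have b1: "i1 < A" "j1 < B" "k1 < C" using kF[OF m0] m0e by auto
  have dm0: "i1 + j1 + k1 = BE + i" using hF m0 m0e unfolding homog_def by fastforce
  define ge where "ge = (A - 1 - i1, B - 1 - j1, C - 1 - k1)"
  define g where "g = (mon ge :: 'a poly3)"
  have hg: "homog (A + B + C - 3 - BE - i) g" unfolding g_def ge_def
    by (rule homog_mon) (use b1 dm0 in simp)
  have "f * g \<notin> gen_ideal ?gs"
  proof
    assume "f * g \<in> gen_ideal ?gs"
    hence "?N (?Y * (f * g)) = 0" by (rule nf_I[OF hBE hG hA])
    moreover have "?Y * (f * g) = g * (?Y * f)" by (simp add: algebra_simps)
    ultimately have z: "?N (g * F) = 0" using nf_mult_nf[OF B0, of A C G g "?Y * f"] by (simp add: F_def)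
    have Fe: "F = (\<Sum>m\<in>Poly_Mapping.keys F. Poly_Mapping.single m (Poly_Mapping.lookup F m))"
      by (rule poly_expand)
    have "?N (g * F) = (\<Sum>m\<in>Poly_Mapping.keys F. rmon A B C G (ge + m) (Poly_Mapping.lookup F m))"
      by (subst Fe) (simp add: sum_distrib_left nf_sum g_def mon_def mult_single nf_single)
    hence "0 = Poly_Mapping.lookup (\<Sum>m\<in>Poly_Mapping.keys F. rmon A B C G (ge + m) (Poly_Mapping.lookup F m)) (A-1,B-1,C-1)"
      using z by simp
    also have "\<dots> = (\<Sum>m\<in>Poly_Mapping.keys F. Poly_Mapping.lookup (rmon A B C G (ge + m) (Poly_Mapping.lookup F m)) (A-1,B-1,C-1))"
      by (simp add: lookup_sum)
    also have "\<dots> = (\<Sum>m\<in>Poly_Mapping.keys F. if m = m0 then Poly_Mapping.lookup F m else 0)"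
    proof (intro sum.cong refl)
      fix m assume mk: "m \<in> Poly_Mapping.keys F"
      obtain i j k where me: "m = (i,j,k)" by (cases m) auto
      have bm: "i < A" "j < B" "k < C" using kF[OF mk] me by auto
      show "Poly_Mapping.lookup (rmon A B C G (ge + m) (Poly_Mapping.lookup F m)) (A-1,B-1,C-1) =
            (if m = m0 then Poly_Mapping.lookup F m else 0)"
      proof (cases "m = m0")
        case True
        have "ge + m = (A-1, B-1, C-1)" using True me m0e b1 by (simp add: ge_def)
        moreover have "redm B G (A-1, B-1, C-1) = (A-1, B-1, C-1)" using B0 by (simp add: redm_simp)
        moreover have "okm A B C G (A-1, B-1, C-1)" using B0 b1 by (simp add: okm_def redm_simp)
        ultimately show ?thesis using True by (simp add: rmon_def)
      next
        case False
        have "redm B G (ge + m) \<noteq> (A-1, B-1, C-1)"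
          using top_lemma[OF b1 bm] False me m0e by (auto simp: ge_def)
        thus ?thesis using False by (simp add: rmon_def lookup_single when_def)
      qed
    qed
    also have "\<dots> = Poly_Mapping.lookup F m0" using m0 by simp
    finally show False using m0 by (simp add: in_keys_iff)
  qed
  thus ?thesis using hg by blast
qed

lemma artinian:
  assumes "A + B + C - 2 \<le> d" "homog d f"
  shows "f \<in> gen_ideal (gens A B C BE G :: 'a::comm_ring_1 poly3 list)"
proof -
  have B0: "0 < B" using hBE by simp
  have "Poly_Mapping.keys (nf A B C G f) = {}"
  proof (rule ccontr)
    assume "Poly_Mapping.keys (nf A B C G f) \<noteq> {}"
    then obtain n where n: "n \<in> Poly_Mapping.keys (nf A B C G f)" by blast
    then obtain m1 where "okm A B C G m1" "n = redm B G m1" using keys_nf[of A B C G f] by blast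
    hence bx: "fst n < A \<and> fst (snd n) < B \<and> snd (snd n) < C" using okm_box[OF B0] by blast
    have "mdeg n = d" using homog_nf[of G B d f A C] assms(2) hG n unfolding homog_def by simp
    thus False using bx assms(1) by (simp add: mdeg_eq) linarith
  qed
  hence "nf A B C G f = 0" by simp
  thus ?thesis using nf_red[OF hBE hG hA, of f] by simp
qed

end


lemma mdeg_Suc_split:
  assumes "mdeg m = Suc n"
  shows "\<exists>m' v. m = m' + v \<and> mdeg m' = n \<and> mdeg v = 1"
proof -
  obtain i j k where m: "m = (i,j,k)" by (cases m) auto
  show ?thesis
  proof (cases "i > 0")
    case True thus ?thesis using assms m by (intro exI[of _ "(i-1,j,k)"] exI[of _ "(1,0,0)"]) auto
  next
    case False
    show ?thesis
    proof (cases "j > 0")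
      case True thus ?thesis using assms m False by (intro exI[of _ "(i,j-1,k)"] exI[of _ "(0,1,0)"]) auto
    next
      case F2: False
      thus ?thesis using assms m False by (intro exI[of _ "(i,j,k-1)"] exI[of _ "(0,0,1)"]) auto
    qed
  qed
qed

lemma Sd_homog:
  assumes "homog e g" "\<And>m c. mdeg m = e \<Longrightarrow> Sd gs L d (Poly_Mapping.single m c)"
  shows "Sd gs L d g"
proof -
  have "g = (\<Sum>m\<in>Poly_Mapping.keys g. Poly_Mapping.single m (Poly_Mapping.lookup g m))"
    by (rule poly_expand)
  also have "Sd gs L d \<dots>"
    by (rule Sd_sum) (use assms in \<open>auto simp: homog_def\<close>)
  finally show ?thesis .
qed

lemma surj_propagate:
  assumes "\<And>g. homog (Suc d0) g \<Longrightarrow> Sd gs L d0 g" "d0 \<le> d" "homog (Suc d) g"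
  shows "Sd gs L d (g :: 'a::comm_ring_1 poly3)"
  using assms(2,3)
proof (induction d arbitrary: g rule: dec_induct)
  case base thus ?case using assms(1) by blast
next
  case (step n)
  show ?case
  proof (rule Sd_homog[OF step.prems])
    fix m and c :: 'a assume "mdeg m = Suc (Suc n)"
    then obtain m' v where mv: "m = m' + v" "mdeg m' = Suc n" "mdeg v = 1" using mdeg_Suc_split by blast
    have "Sd gs L n (Poly_Mapping.single m' c)" by (rule step.IH) (rule homog_single[OF mv(2)])
    hence "Sd gs L (1 + n) (mon v * Poly_Mapping.single m' c)" by (rule Sd_mult) (rule homog_mon[OF mv(3)])
    thus "Sd gs L (Suc n) (Poly_Mapping.single m c)" using mv(1) by (simp add: mon_def mult_single add.commute)
  qed
qed

lemma wlp_abstract: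
  fixes gs :: "'a::comm_ring_1 poly3 list"
  assumes L: "homog 1 L"
    and art: "artinian_quot gs"
    and surj: "\<And>g. homog (Suc d0) g \<Longrightarrow> Sd gs L d0 g"
    and nd: "\<And>i f. homog i f \<Longrightarrow> f \<notin> gen_ideal gs \<Longrightarrow> \<exists>g. homog (s - i) g \<and> f * g \<notin> gen_ideal gs"
    and s: "2 * d0 \<le> s"
  shows "has_WLP gs"
  unfolding has_WLP_def
proof (intro conjI exI[of _ L] allI)
  show "artinian_quot gs" by (rule art)
  show "homog 1 L" by (rule L)
  fix d
  show "mult_injective gs L d \<or> mult_surjective gs L d"
  proof (cases "d0 \<le> d")
    case True
    have "mult_surjective gs L d"
      unfolding mult_surjective_def using surj_propagate[OF surj True] unfolding Sd_def by blast
    thus ?thesis by blast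
  next
    case False
    have "mult_injective gs L d"
      unfolding mult_injective_def
    proof (intro allI impI)
      fix f assume hf: "homog d f" and Lf: "L * f \<in> gen_ideal gs"
      show "f \<in> gen_ideal gs"
      proof (rule ccontr)
        assume "f \<notin> gen_ideal gs"
        then obtain g where hg: "homog (s - d) g" and fg: "f * g \<notin> gen_ideal gs" using nd[OF hf] by blast
        have sd: "s - d = Suc (s - d - 1)" "d0 \<le> s - d - 1" using False s by auto
        have "Sd gs L (s - d - 1) g" using surj_propagate[OF surj sd(2)] hg sd(1) by simp
        then obtain h where gh: "g - L * h \<in> gen_ideal gs" unfolding Sd_def by blast
        have "f * (g - L * h) + (L * f) * h \<in> gen_ideal gs"
          by (rule gi_add[OF gi_mult[OF gh, of f] gi_mult_right[OF Lf, of h]])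
        moreover have "f * (g - L * h) + (L * f) * h = f * g" by (simp add: algebra_simps)
        ultimately show False using fg by simp
      qed
    qed
    thus ?thesis by blast
  qed
qed



definition Lyx :: "'a::comm_ring_1 poly3" where "Lyx = mon (0,1,0) - mon (1,0,0)"

lemma homog_Lyx: "homog 1 Lyx"
  unfolding Lyx_def by (intro homog_diff homog_mon) simp_all

context
  fixes A B C BE G :: nat
  assumes hBE: "0 < BE" "BE < B" and hG: "0 < G" "G < B" "G < C" and hA: "B < A + G"
begin

abbreviation SS where "SS d g \<equiv> Sd (gens A B C BE G) Lyx d g"

lemma yx_step: "i + j + k = d \<Longrightarrow> SS d (mon (i, Suc j, k) - mon (Suc i, j, k) :: 'a::comm_ring_1 poly3)"
proof -
  assume "i + j + k = d"
  hence "SS d (Lyx * mon (i,j,k) :: 'a poly3)" by (intro Sd_L homog_mon) simp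
  moreover have "(Lyx * mon (i,j,k) :: 'a poly3) = mon (i, Suc j, k) - mon (Suc i, j, k)"
    by (simp add: Lyx_def left_diff_distrib mon_mult)
  ultimately show ?thesis by simp
qed

lemma yx: "i + j + k = Suc d \<Longrightarrow> SS d (mon (i, j, k) - mon (i + j, 0, k) :: 'a::comm_ring_1 poly3)"
proof (induction j arbitrary: i)
  case 0 thus ?case by (simp add: Sd_zero)
next
  case (Suc j)
  have "SS d (mon (i, Suc j, k) - mon (Suc i, j, k) :: 'a poly3)" using Suc.prems by (intro yx_step) simp
  moreover have "SS d (mon (Suc i, j, k) - mon (Suc i + j, 0, k) :: 'a poly3)" using Suc.prems by (intro Suc.IH) simp
  ultimately have "SS d ((mon (i, Suc j, k) - mon (Suc i, j, k)) + (mon (Suc i, j, k) - mon (Suc i + j, 0, k)) :: 'a poly3)"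
    by (rule Sd_add)
  thus ?case by simp
qed

lemma SS_trans: "SS d (x - y) \<Longrightarrow> SS d (y :: 'a::comm_ring_1 poly3) \<Longrightarrow> SS d x"
  using Sd_add[of _ _ d "x - y" y] by simp

lemma kill_C: "i + k = Suc d \<Longrightarrow> C \<le> k \<Longrightarrow> SS d (mon (i,0,k) :: 'a::comm_ring_1 poly3)"
  unfolding mon_def by (intro Sd_ideal single_in_I[OF hBE hG hA]) simp

lemma kill_CG: "i + k = Suc d \<Longrightarrow> B - BE \<le> i \<Longrightarrow> C - G \<le> k \<Longrightarrow> SS d (mon (i,0,k) :: 'a::comm_ring_1 poly3)"
proof -
  assume h: "i + k = Suc d" "B - BE \<le> i" "C - G \<le> k"
  have "SS d (mon (i - (B - BE), B - BE, k) - mon (i - (B - BE) + (B - BE), 0, k) :: 'a poly3)"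
    using h by (intro yx) simp
  moreover have "SS d (mon (i - (B - BE), B - BE, k) :: 'a poly3)"
    unfolding mon_def using h by (intro Sd_ideal single_in_I[OF hBE hG hA]) simp
  ultimately have "SS d (mon (i - (B - BE) + (B - BE), 0, k) :: 'a poly3)"
    using Sd_diff by fastforce
  thus ?thesis using h by simp
qed

lemma kill_A: "i + k = Suc d \<Longrightarrow> A + G - BE \<le> i \<Longrightarrow> SS d (mon (i,0,k) :: 'a::comm_ring_1 poly3)"
proof -
  assume h: "i + k = Suc d" "A + G - BE \<le> i"
  have "SS d (mon (i - (B - BE), B - BE, k) - mon (i - (B - BE) + (B - BE), 0, k) :: 'a poly3)"
    using h hA hBE by (intro yx) simp
  moreover have "SS d (mon (i - (B - BE), B - BE, k) :: 'a poly3)"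
    unfolding mon_def using h hA hBE by (intro Sd_ideal single_in_I[OF hBE hG hA]) arith
  ultimately have "SS d (mon (i - (B - BE) + (B - BE), 0, k) :: 'a poly3)"
    using Sd_diff by fastforce
  thus ?thesis using h hA hBE by simp
qed

lemma link: "i + k = Suc d \<Longrightarrow> B - G \<le> i \<Longrightarrow> G \<le> k \<Longrightarrow>
   SS d (mon (i,0,k) - mon (i + G, 0, k - G) :: 'a::comm_ring_1 poly3)"
proof -
  assume h: "i + k = Suc d" "B - G \<le> i" "G \<le> k"
  have e: "(mon (i,0,k) - mon (i - (B - G), B, k - G) :: 'a poly3) =
        - (mon (i - (B - G), 0, k - G) * (mon (0,B,0) - mon (B-G,0,G)))"
    using h by (simp add: right_diff_distrib mon_mult)
  have "SS d (mon (i,0,k) - mon (i - (B - G), B, k - G) :: 'a poly3)"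
    unfolding e by (intro Sd_ideal gi_neg gi_mult gen1[OF hBE hG hA])
  moreover have "SS d (mon (i - (B - G), B, k - G) - mon (i - (B - G) + B, 0, k - G) :: 'a poly3)"
    using h hG by (intro yx) simp
  ultimately have "SS d ((mon (i,0,k) - mon (i - (B - G), B, k - G)) + (mon (i - (B - G), B, k - G) - mon (i - (B - G) + B, 0, k - G)) :: 'a poly3)"
    by (rule Sd_add)
  moreover have "i - (B - G) + B = i + G" using h hG by simp
  ultimately show ?thesis by simp
qed

lemma all_from_line:
  assumes "\<And>i. i \<le> Suc d \<Longrightarrow> SS d (mon (i, 0, Suc d - i) :: 'a::comm_ring_1 poly3)"
  shows "homog (Suc d) g \<Longrightarrow> SS d (g :: 'a poly3)"
proof -
  assume hg: "homog (Suc d) g"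
  show ?thesis
  proof (rule Sd_homog[OF hg])
    fix m and c :: 'a assume md: "mdeg m = Suc d"
    obtain i j k where m: "m = (i,j,k)" by (cases m) auto
    have "SS d (mon (i,j,k) - mon (i + j, 0, k) :: 'a poly3)" using md m by (intro yx) simp
    moreover have "SS d (mon (i + j, 0, Suc d - (i + j)) :: 'a poly3)" using md m by (intro assms) simp
    moreover have "Suc d - (i + j) = k" using md m by simp
    ultimately have "SS d (mon (i,j,k) :: 'a poly3)" using SS_trans by metis
    hence "SS d (Poly_Mapping.single (0,0,0) c * mon (i,j,k) :: 'a poly3)" by (rule Sd_single_const)
    thus "SS d (Poly_Mapping.single m c)" by (simp add: m mon_def mult_single)
  qed
qed

lemma surj_T1:
  assumes T1: "B + C \<le> Suc d + 1 + BE" "B + C \<le> Suc d + 1 + G"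
  shows "homog (Suc d) g \<Longrightarrow> SS d (g :: 'a::comm_ring_1 poly3)"
proof (rule all_from_line)
  fix i assume "i \<le> Suc d"
  thus "SS d (mon (i, 0, Suc d - i) :: 'a poly3)"
  proof (induction i rule: less_induct)
    case (less i)
    show ?case
    proof (cases "i + C \<le> Suc d")
      case True thus ?thesis by (intro kill_C) simp_all
    next
      case F1: False
      show ?thesis
      proof (cases "i + C \<le> Suc d + G")
        case True thus ?thesis using F1 T1 less.prems by (intro kill_CG) simp_all
      next
        case False
        have "SS d (mon (i - G,0,Suc d - (i - G)) - mon (i - G + G, 0, Suc d - (i - G) - G) :: 'a poly3)"
          using False less.prems T1 hG by (intro link) simp_all
        moreover have "SS d (mon (i - G, 0, Suc d - (i - G)) :: 'a poly3)"
          using less.prems hG False T1 by (intro less.IH) simp_all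
        moreover have "i - G + G = i" "Suc d - (i - G) - G = Suc d - i" using False less.prems T1 hG by simp_all
        ultimately show ?thesis using Sd_diff by fastforce
      qed
    qed
  qed
qed

lemma surj_T2:
  assumes T2: "B + C \<le> Suc d + 1 + BE" "B + C \<le> Suc d + 1 + 2 * G" "A + 2 * G \<le> Suc d + BE + 1" "G < BE"
  shows "homog (Suc d) g \<Longrightarrow> SS d (g :: 'a::comm_ring_1 poly3)"
proof (rule all_from_line)
  fix i assume "i \<le> Suc d"
  thus "SS d (mon (i, 0, Suc d - i) :: 'a poly3)"
  proof (induction "Suc d - i" arbitrary: i rule: less_induct)
    case (less i)
    show ?case
    proof (cases "A + G - BE \<le> i")
      case True thus ?thesis using less.prems by (intro kill_A) simp_all
    next
      case FA: False
      show ?thesis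
      proof (cases "i < B - G")
        case True
        show ?thesis
        proof (cases "i + C \<le> Suc d")
          case True thus ?thesis by (intro kill_C) simp_all
        next
          case False thus ?thesis using \<open>i < B - G\<close> T2 less.prems by (intro kill_CG) simp_all
        qed
      next
        case False
        have "SS d (mon (i,0,Suc d - i) - mon (i + G, 0, Suc d - i - G) :: 'a poly3)"
          using False FA less.prems T2 hG hA by (intro link) simp_all
        moreover have "SS d (mon (i + G, 0, Suc d - (i + G)) :: 'a poly3)"
          using less.prems hG FA T2 hA by (intro less.hyps) simp_all
        moreover have "Suc d - (i + G) = Suc d - i - G" by simp
        ultimately show ?thesis using SS_trans by metis
      qed
    qed
  qed
qed

end


lemma homog_numeral: "homog 0 (numeral n :: 'a::comm_ring_1 poly3)"
  using homog_of_int[of "numeral n"] by simp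

lemma homog_one: "homog 0 (1 :: 'a::comm_ring_1 poly3)"
  using homog_of_int[of 1] by simp

lemma pow_add_homog:
  assumes "homog 1 a" "homog 1 b" "1 \<le> n"
  shows "\<exists>h. homog (n - 1) h \<and> (a + b) ^ n = a ^ n + b * (h :: 'a::comm_ring_1 poly3)"
  using assms(3)
proof (induction n rule: dec_induct)
  case base thus ?case using homog_one by (intro exI[of _ 1]) simp
next
  case (step n)
  then obtain h where h: "homog (n - 1) h" "(a + b) ^ n = a ^ n + b * h" by blast
  have "(a + b) ^ Suc n = a ^ Suc n + b * (a ^ n + (a + b) * h)"
    using h(2) by (simp add: algebra_simps)
  moreover have "homog n (a ^ n + (a + b) * h)"
  proof (rule homog_add)
    show "homog n (a ^ n)" by (rule homog_pow[OF assms(1)])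
    have "homog (1 + (n - 1)) ((a + b) * h)" by (rule homog_mult[OF homog_add[OF assms(1,2)] h(1)])
    thus "homog n ((a + b) * h)" using step.hyps by simp
  qed
  ultimately show ?case by auto
qed

lemma eight_pow: "1 + 7 * int n \<le> 8 ^ n"
proof (induction n)
  case 0 thus ?case by simp
next
  case (Suc n)
  have "(8::int) ^ n \<ge> 1" by simp
  thus ?case using Suc by simp
qed

lemma delta_ne:
  assumes "1 \<le> A"
  shows "2 * (-8::int) ^ A \<noteq> 9 * int A + 2"
proof -
  have e: "(-8::int) ^ A = (-1) ^ A * 8 ^ A" by (simp flip: power_mult_distrib)
  show ?thesis
  proof (cases "even A")
  case True
  hence "(-8::int) ^ A = 8 ^ A" using e by simp
  thus ?thesis using eight_pow[of A] assms by simp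
next
  case False
  hence "(-8::int) ^ A = - (8 ^ A)" using e by simp
  moreover have "(0::int) < 8 ^ A" by simp
  ultimately show ?thesis by linarith
qed
qed

lemma sigma_eq:
  fixes m :: nat
  shows "9 * (\<Sum>t\<le>m. int (Suc (Suc m) choose Suc (Suc t)) * 3 ^ Suc (Suc t) * (-3) ^ t) =
         (-8) ^ Suc (Suc m) - 1 + 9 * int (Suc (Suc m))"
proof -
  let ?A = "Suc (Suc m)"
  have "((-9::int) + 1) ^ ?A = (\<Sum>k\<le>?A. of_nat (?A choose k) * (-9) ^ k * 1 ^ (?A - k))"
    by (rule binomial_ring)
  also have "\<dots> = (\<Sum>k\<le>?A. int (?A choose k) * (-9) ^ k)" by simp
  also have "\<dots> = int (?A choose 0) * (-9) ^ 0 + (int (?A choose 1) * (-9) ^ 1 +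
      (\<Sum>t\<le>m. int (?A choose Suc (Suc t)) * (-9) ^ Suc (Suc t)))"
    by (simp only: sum.atMost_Suc_shift One_nat_def)
  finally have b: "(-8::int) ^ ?A = 1 + int ?A * (-9) + (\<Sum>t\<le>m. int (?A choose Suc (Suc t)) * (-9) ^ Suc (Suc t))"
    by (simp only: binomial_n_0 power_0 power_one_right binomial_1) simp
  have "\<And>t. 9 * (int (?A choose Suc (Suc t)) * 3 ^ Suc (Suc t) * (-3) ^ t) = int (?A choose Suc (Suc t)) * (-9) ^ Suc (Suc t)"
  proof -
    fix t
    have "(-9::int) ^ Suc (Suc t) = 3 ^ Suc (Suc t) * (-3) ^ Suc (Suc t)"
      by (simp add: power_mult_distrib[symmetric])
    also have "\<dots> = 9 * 3 ^ Suc (Suc t) * (-3) ^ t" by simp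
    finally show "9 * (int (?A choose Suc (Suc t)) * 3 ^ Suc (Suc t) * (-3) ^ t) = int (?A choose Suc (Suc t)) * (-9) ^ Suc (Suc t)"
      by simp
  qed
  hence "9 * (\<Sum>t\<le>m. int (?A choose Suc (Suc t)) * 3 ^ Suc (Suc t) * (-3) ^ t) =
        (\<Sum>t\<le>m. int (?A choose Suc (Suc t)) * (-9) ^ Suc (Suc t))"
    by (simp only: sum_distrib_left)
  thus ?thesis using b by simp
qed



lemma family_surj:
  fixes p q y :: "'a::field_char_0 poly3" and gs :: "'a poly3 list"
  assumes hp: "homog 1 p" and hq: "homog 1 q" and hy: "homog 1 y"
    and A3: "3 \<le> A"
    and i1: "p ^ A \<in> gen_ideal gs" and i2: "q ^ A \<in> gen_ideal gs"
    and i3: "y ^ 3 - p ^ 2 * q \<in> gen_ideal gs" and i4: "p ^ (A - 2) * y ^ 2 \<in> gen_ideal gs"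
  shows "u + j + k = A \<Longrightarrow> Sd gs (3 * y - 2 * p - q) (A - 1) (p ^ u * y ^ j * q ^ k)"
proof -
  define L where "L = 3 * y - 2 * p - q"
  define V where "V = y - p"
  define E where "E t = p ^ (A - t) * V ^ t" for t
  let ?W = "Sd gs L (A - 1)"
  have hV: "homog 1 V" unfolding V_def by (rule homog_diff[OF hy hp])
  have hL: "homog 1 L" unfolding L_def
    using homog_mult[OF homog_numeral hy] homog_mult[OF homog_numeral hp]
    by (intro homog_diff[OF homog_diff] hq) simp_all
  have qe: "q = (p + 3 * V) + (- L)" by (simp add: L_def V_def algebra_simps)
  have ye: "y = p + V" by (simp add: V_def)
  have hgen: "homog (a1 + a2 + a3 + a4) (p ^ a1 * V ^ a2 * y ^ a3 * q ^ a4)" for a1 a2 a3 a4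
    by (intro homog_mult homog_pow hp hV hy hq)
  have WL: "?W (L * h)" if "homog (A - 1) h" for h by (rule Sd_L[OF that])
  have R: "?W (E (t + 3) + 3 * E (t + 2))" if t3: "t + 3 \<le> A" for t
  proof -
    define r where "r = A - 3 - t"
    have Ar: "A = r + t + 3" using t3 by (simp add: r_def)
    have core: "y ^ 3 - p ^ 2 * q = V ^ 3 + 3 * p * V ^ 2 + L * p ^ 2"
      by (simp add: L_def V_def power2_eq_square power3_eq_cube algebra_simps)
    have "p ^ r * V ^ t * (y ^ 3 - p ^ 2 * q) = (E (t + 3) + 3 * E (t + 2)) + L * (p ^ (r + 2) * V ^ t)"
      unfolding core E_def Ar by (simp add: algebra_simps power_add power2_eq_square power3_eq_cube numeral_eq_Suc)
    moreover have "p ^ r * V ^ t * (y ^ 3 - p ^ 2 * q) \<in> gen_ideal gs" by (rule gi_mult[OF i3])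
    moreover have "homog (A - 1) (p ^ (r + 2) * V ^ t)"
      using homog_mult[OF homog_pow[OF hp, of "r+2"] homog_pow[OF hV, of t]] Ar by simp
    ultimately show ?thesis using Sd_diff[OF Sd_ideal WL] by (metis add_diff_cancel_right')
  qed
  have chain: "?W (E t - of_int ((-3) ^ (t - 2)) * E 2)" if "2 \<le> t" "t \<le> A" for t
    using that
  proof (induction t rule: dec_induct)
    case base thus ?case by (simp add: Sd_zero)
  next
    case (step n)
    have "?W ((E (n - 2 + 3) + 3 * E (n - 2 + 2)) - of_int 3 * (E n - of_int ((-3) ^ (n - 2)) * E 2))"
      using step by (intro Sd_diff[OF R Sd_const[OF step.IH]]) simp_all
    moreover have "n - 2 + 3 = Suc n" "n - 2 + 2 = n" using step by auto
    ultimately have w: "?W ((E (Suc n) + 3 * E n) - 3 * (E n - of_int ((-3) ^ (n - 2)) * E 2))" by simp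
    have c: "(of_int ((-3) ^ (Suc n - 2)) :: 'a poly3) = - 3 * of_int ((-3) ^ (n - 2))"
    proof -
      have e: "Suc n - 2 = Suc (n - 2)" using step(1) by arith
      show ?thesis unfolding e power_Suc by simp
    qed
    have "(E (Suc n) + 3 * E n) - 3 * (E n - of_int ((-3) ^ (n - 2)) * E 2) =
          E (Suc n) - of_int ((-3) ^ (Suc n - 2)) * E 2"
      unfolding c by (simp add: algebra_simps)
    thus ?case using w by simp
  qed
  have WE0: "?W (E 0)" unfolding E_def by (rule Sd_ideal) (simp add: i1)
  have W12: "?W (2 * E 1 + E 2)"
  proof -
    define r where "r = A - 2"
    have Ar: "A = r + 2" using A3 by (simp add: r_def)
    have "p ^ (A - 2) * y ^ 2 = E 0 + (2 * E 1 + E 2)"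
      unfolding E_def ye Ar by (simp add: algebra_simps power2_eq_square)
    hence "?W (E 0 + (2 * E 1 + E 2))" using Sd_ideal[OF i4] by simp
    hence "?W ((E 0 + (2 * E 1 + E 2)) - E 0)" using WE0 by (rule Sd_diff)
    thus ?thesis by simp
  qed
  define m where "m = A - 2"
  have Am: "A = Suc (Suc m)" using A3 by (simp add: m_def)
  define c where "c t = int (A choose t) * 3 ^ t" for t
  define \<sigma> where "\<sigma> = (\<Sum>t\<le>m. c (Suc (Suc t)) * (-3) ^ t)"
  have h3V: "homog 1 (3 * V)" using homog_mult[OF homog_numeral hV] by simp
  have WS: "?W ((p + 3 * V) ^ A)"
  proof -
    obtain h where h: "homog (A - 1) h" "(p + 3 * V + - L) ^ A = (p + 3 * V) ^ A + (- L) * h"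
      using pow_add_homog[of "p + 3 * V" "- L" A] hp hV hL A3
        homog_add[OF hp h3V] homog_neg[OF hL] by auto
    have "(p + 3 * V) ^ A = q ^ A + L * h" using h(2) qe by simp
    thus ?thesis using Sd_add[OF Sd_ideal[OF i2] WL[OF h(1)]] by simp
  qed
  have binom: "(p + 3 * V) ^ A = (\<Sum>t\<le>A. of_int (c t) * E t)"
  proof -
    have "(3 * V + p) ^ A = (\<Sum>t\<le>A. of_nat (A choose t) * (3 * V) ^ t * p ^ (A - t))"
      by (rule binomial_ring)
    also have "\<dots> = (\<Sum>t\<le>A. of_int (c t) * E t)"
      by (intro sum.cong refl) (simp add: c_def E_def power_mult_distrib algebra_simps)
    finally show ?thesis by (simp add: add.commute)
  qed
  have split: "(\<Sum>t\<le>A. of_int (c t) * E t) =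
      of_int (c 0) * E 0 + (of_int (c 1) * E 1 + (\<Sum>t\<le>m. of_int (c (Suc (Suc t))) * E (Suc (Suc t))))"
    unfolding Am by (simp only: sum.atMost_Suc_shift One_nat_def)
  have Wrest: "?W ((\<Sum>t\<le>m. of_int (c (Suc (Suc t))) * E (Suc (Suc t))) - of_int \<sigma> * E 2)"
  proof -
    have "?W (\<Sum>t\<le>m. of_int (c (Suc (Suc t))) * (E (Suc (Suc t)) - of_int ((-3) ^ t) * E 2))"
    proof (intro Sd_sum Sd_const)
      fix t assume "t \<in> {..m}"
      hence "Suc (Suc t) \<le> A" using Am by simp
      from chain[OF _ this] show "?W (E (Suc (Suc t)) - of_int ((-3) ^ t) * E 2)" by simp
    qed simp
    moreover have "(\<Sum>t\<le>m. of_int (c (Suc (Suc t))) * (E (Suc (Suc t)) - of_int ((-3) ^ t) * E 2)) =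
        (\<Sum>t\<le>m. of_int (c (Suc (Suc t))) * E (Suc (Suc t))) - of_int \<sigma> * E 2"
      by (simp add: \<sigma>_def right_diff_distrib sum_subtractf sum_distrib_right mult.assoc)
    ultimately show ?thesis by simp
  qed
  have c01: "c 0 = 1" "c 1 = 3 * int A" by (simp_all add: c_def)
  have W3: "?W (of_int (3 * int A) * E 1 + of_int \<sigma> * E 2)"
  proof -
    have "?W ((p + 3 * V) ^ A - ((\<Sum>t\<le>m. of_int (c (Suc (Suc t))) * E (Suc (Suc t))) - of_int \<sigma> * E 2) - E 0)"
      by (intro Sd_diff WS Wrest WE0)
    moreover have "(p + 3 * V) ^ A - ((\<Sum>t\<le>m. of_int (c (Suc (Suc t))) * E (Suc (Suc t))) - of_int \<sigma> * E 2) - E 0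
       = of_int (3 * int A) * E 1 + of_int \<sigma> * E 2"
      unfolding binom split c01 by simp
    ultimately show ?thesis by simp
  qed
  define \<Delta> where "\<Delta> = 2 * \<sigma> - 3 * int A"
  have \<Delta>ne: "\<Delta> \<noteq> 0"
  proof
    assume "\<Delta> = 0"
    hence "2 * \<sigma> = 3 * int A" by (simp add: \<Delta>_def)
    moreover have "9 * \<sigma> = (-8) ^ A - 1 + 9 * int A" unfolding \<sigma>_def c_def Am
      using sigma_eq[of m] by (simp add: mult.assoc)
    ultimately have "2 * (-8::int) ^ A = 9 * int A + 2" by linarith
    thus False using delta_ne[of A] A3 by simp
  qed
  have WD2: "?W (of_int \<Delta> * E 2)"
  proof -
    have "?W (of_int 2 * (of_int (3 * int A) * E 1 + of_int \<sigma> * E 2) - of_int (3 * int A) * (2 * E 1 + E 2))"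
      by (intro Sd_diff Sd_const W3 W12)
    thus ?thesis by (simp add: \<Delta>_def algebra_simps)
  qed
  have WD1: "?W (of_int \<Delta> * E 1)"
  proof -
    have "?W (of_int \<sigma> * (2 * E 1 + E 2) - (of_int (3 * int A) * E 1 + of_int \<sigma> * E 2))"
      by (intro Sd_diff Sd_const W3 W12)
    thus ?thesis by (simp add: \<Delta>_def algebra_simps)
  qed
  have undo: "?W g" if "?W (of_int \<Delta> * g)" for g
  proof -
    have w: "?W (Poly_Mapping.single (0,0,0) (inverse (of_int \<Delta>)) * (of_int \<Delta> * g))"
      by (rule Sd_single_const[OF that])
    have one: "Poly_Mapping.single (0,0,0) (inverse (of_int \<Delta> :: 'a)) * of_int \<Delta> = 1"
      using \<Delta>ne by (simp add: mult_single zero_prod_def[symmetric] flip: single_of_int)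
    have "Poly_Mapping.single (0,0,0) (inverse (of_int \<Delta> :: 'a)) * (of_int \<Delta> * g) =
        (Poly_Mapping.single (0,0,0) (inverse (of_int \<Delta> :: 'a)) * of_int \<Delta>) * g"
      by (simp only: mult.assoc)
    also have "\<dots> = g" by (simp only: one mult_1_left)
    finally show ?thesis using w by simp
  qed
  have WE: "?W (E t)" if "t \<le> A" for t
  proof -
    have WE1: "?W (E 1)" by (rule undo[OF WD1])
    have WE2: "?W (E 2)" by (rule undo[OF WD2])
    consider "t = 0" | "t = 1" | "2 \<le> t" by linarith
    thus ?thesis
    proof cases
      case 3
      have "?W ((E t - of_int ((-3) ^ (t - 2)) * E 2) + of_int ((-3) ^ (t - 2)) * E 2)"
        by (intro Sd_add chain Sd_const WE2 3 that)
      thus ?thesis by simp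
    qed (use WE0 WE1 in simp_all)
  qed
  have main: "\<forall>u t j k. j + k = n \<longrightarrow> u + t + j + k = A \<longrightarrow> ?W (p ^ u * V ^ t * y ^ j * q ^ k)" for n
  proof (induction n)
    case 0
    show ?case
    proof (intro allI impI)
      fix u t j k :: nat assume "j + k = 0" "u + t + j + k = A"
      hence "u = A - t" "j = 0" "k = 0" "t \<le> A" by simp_all
      hence "p ^ u * V ^ t * y ^ j * q ^ k = E t" "t \<le> A" by (simp_all add: E_def)
      thus "?W (p ^ u * V ^ t * y ^ j * q ^ k)" using WE by simp
    qed
  next
    case (Suc n)
    note IH = Suc.IH
    show ?case
    proof (intro allI impI)
      fix u t j k :: nat assume jk: "j + k = Suc n" "u + t + j + k = A"
      show "?W (p ^ u * V ^ t * y ^ j * q ^ k)"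
      proof (cases j)
        case (Suc j')
        have "p ^ u * V ^ t * y ^ j * q ^ k = p ^ Suc u * V ^ t * y ^ j' * q ^ k + p ^ u * V ^ Suc t * y ^ j' * q ^ k"
        proof -
          let ?X = "p ^ u * V ^ t * y ^ j' * q ^ k"
          have "p ^ u * V ^ t * y ^ j * q ^ k = ?X * y" unfolding Suc by (simp add: algebra_simps)
          also have "\<dots> = ?X * (p + V)" using ye by (rule arg_cong)
          also have "\<dots> = p ^ Suc u * V ^ t * y ^ j' * q ^ k + p ^ u * V ^ Suc t * y ^ j' * q ^ k"
            by (simp add: algebra_simps)
          finally show ?thesis .
        qed
        moreover have "?W (p ^ Suc u * V ^ t * y ^ j' * q ^ k)"
          using IH[rule_format, of j' k "Suc u" t] jk Suc by simp
        moreover have "?W (p ^ u * V ^ Suc t * y ^ j' * q ^ k)"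
          using IH[rule_format, of j' k u "Suc t"] jk Suc by simp
        ultimately show ?thesis using Sd_add by metis
      next
        case 0
        then obtain k' where k: "k = Suc k'" using jk by (cases k) auto
        have "p ^ u * V ^ t * y ^ j * q ^ k =
            p ^ Suc u * V ^ t * y ^ j * q ^ k' + 3 * (p ^ u * V ^ Suc t * y ^ j * q ^ k') - L * (p ^ u * V ^ t * y ^ j * q ^ k')"
        proof -
          let ?X = "p ^ u * V ^ t * y ^ j * q ^ k'"
          have "p ^ u * V ^ t * y ^ j * q ^ k = ?X * q" unfolding k by (simp add: algebra_simps)
          also have "\<dots> = ?X * ((p + 3 * V) + (- L))" using qe by (rule arg_cong)
          also have "\<dots> = p ^ Suc u * V ^ t * y ^ j * q ^ k' + 3 * (p ^ u * V ^ Suc t * y ^ j * q ^ k') - L * ?X"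
            by (simp add: algebra_simps)
          finally show ?thesis .
        qed
        moreover have "?W (p ^ Suc u * V ^ t * y ^ j * q ^ k')"
          using IH[rule_format, of j k' "Suc u" t] jk k by simp
        moreover have "?W (p ^ u * V ^ Suc t * y ^ j * q ^ k')"
          using IH[rule_format, of j k' u "Suc t"] jk k by simp
        moreover have "?W (L * (p ^ u * V ^ t * y ^ j * q ^ k'))"
        proof (rule WL)
          have "u + t + j + k' = A - 1" using jk k by simp
          thus "homog (A - 1) (p ^ u * V ^ t * y ^ j * q ^ k')" using hgen[of u t j k'] by simp
        qed
        ultimately show ?thesis using Sd_add Sd_diff Sd_const[of gs L "A - 1" _ 3] by (metis of_int_numeral)
      qed
    qed
  qed
  assume "u + j + k = A"
  hence "?W (p ^ u * V ^ 0 * y ^ j * q ^ k)" using main[of "j + k", rule_format, of j k u 0] by simp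
  thus ?thesis by (simp add: L_def)
qed


lemma cases_arith:
  fixes A B C BE G D :: nat
  assumes "C \<le> A" "2 \<le> C" "1 \<le> BE" "BE < B" "1 \<le> G" "B < A + G" "G < B" "G < C"
    and ab: "2 * B + C \<le> A + 6 \<or> (B + C \<le> A + 2 \<and> BE + B + C \<le> A + 5)"
    and D: "D = (A + B + C - 3 - BE) div 2 + 1"
  shows "(B = 3 \<and> BE = 1 \<and> A = C) \<or> (B + C \<le> D + 1 + BE \<and> B + C \<le> D + 1 + G) \<or>
         (B + C \<le> D + 1 + BE \<and> B + C \<le> D + 1 + 2 * G \<and> A + 2 * G \<le> D + BE + 1 \<and> G < BE)"
proof -
  have low: "N \<le> D" if "2 * N \<le> A + B + C - 1 - BE" for N
    using that D assms(1-4) by linarith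
  have s3: "3 + BE \<le> A + B + C" using assms by linarith
  show ?thesis
  proof (cases "B = 3 \<and> BE = 1 \<and> A = C")
    case True thus ?thesis by blast
  next
    case nf: False
    have c1: "B + C \<le> D + 1 + BE"
    proof -
      have "B + C \<le> A + 1 + BE" using ab assms nf by auto
      thus ?thesis using low[of "B + C - 1 - BE"] s3 by linarith
    qed
    show ?thesis
    proof (cases "BE \<le> G")
      case True thus ?thesis using c1 by linarith
    next
      case False
      show ?thesis
      proof (cases "B + C - 1 + BE \<le> A + 2 * G")
        case True
        hence "B + C \<le> D + 1 + G" using low[of "B + C - 1 - G"] s3 assms by linarith
        thus ?thesis using c1 by blast
      next
        case F2: False
        have G1: "G = 1" using F2 ab assms False by linarith
        have "B + C \<le> D + 1 + 2 * G" using low[of "B + C - 3"] G1 ab assms False s3 by linarith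
        moreover have "A + 2 * G \<le> D + BE + 1" using low[of "A + 1 - BE"] G1 F2 assms s3 by linarith
        ultimately show ?thesis using c1 False by simp
      qed
    qed
  qed
qed


lemma mon_pow: "(mon (i,j,k) :: 'a::comm_ring_1 poly3) ^ n = mon (n * i, n * j, n * k)"
  by (induction n) (simp_all add: mon_zero mon_mult)

lemma surj_from_mons:
  assumes "\<And>i j k. i + j + k = D \<Longrightarrow> Sd gs L d (mon (i,j,k) :: 'a::comm_ring_1 poly3)"
  shows "homog D g \<Longrightarrow> Sd gs L d g"
proof -
  assume hg: "homog D g"
  show ?thesis
  proof (rule Sd_homog[OF hg])
    fix m and c :: 'a assume md: "mdeg m = D"
    obtain i j k where m: "m = (i,j,k)" by (cases m) auto
    have "Sd gs L d (Poly_Mapping.single (0,0,0) c * mon (i,j,k))"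
      by (rule Sd_single_const, rule assms) (use md m in simp)
    thus "Sd gs L d (Poly_Mapping.single m c)" by (simp add: m mon_def mult_single)
  qed
qed

lemma wlp_nat:
  fixes A B C BE G :: nat
  assumes hC: "C \<le> A" "2 \<le> C" and hBE: "1 \<le> BE" "BE < B" and hG: "1 \<le> G" "G < B" "G < C"
    and hA: "B < A + G"
    and ab: "2 * B + C \<le> A + 6 \<or> (B + C \<le> A + 2 \<and> BE + B + C \<le> A + 5)"
  shows "has_WLP (gens A B C BE G :: 'k::field_char_0 poly3 list)"
proof -
  have hBE': "0 < BE" "BE < B" and hG': "0 < G" "G < B" "G < C" using hBE hG by auto
  let ?gs = "gens A B C BE G :: 'k poly3 list"
  define s where "s = A + B + C - 3 - BE"
  define d0 where "d0 = s div 2"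
  have art: "artinian_quot ?gs"
    unfolding artinian_quot_def using artinian[OF hBE' hG' hA] by blast
  have nd: "\<And>i f. homog i f \<Longrightarrow> f \<notin> gen_ideal ?gs \<Longrightarrow> \<exists>g. homog (s - i) g \<and> f * g \<notin> gen_ideal ?gs"
    unfolding s_def using nondeg[OF hBE' hG' hA] by blast
  have s2: "2 * d0 \<le> s" unfolding d0_def by simp
  have ca: "(B = 3 \<and> BE = 1 \<and> A = C) \<or> (B + C \<le> Suc d0 + 1 + BE \<and> B + C \<le> Suc d0 + 1 + G) \<or>
         (B + C \<le> Suc d0 + 1 + BE \<and> B + C \<le> Suc d0 + 1 + 2 * G \<and> A + 2 * G \<le> Suc d0 + BE + 1 \<and> G < BE)"
    using cases_arith[OF hC hBE hG(1) hA hG(2,3) ab, of "Suc d0"] unfolding d0_def s_def by simp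
  show ?thesis
  proof (cases "B = 3 \<and> BE = 1 \<and> A = C")
    case fam: True
    hence B3: "B = 3" "BE = 1" "C = A" by auto
    have A3: "3 \<le> A" using hA hG B3 hC by linarith
    have sA: "s = 2 * A - 1" using B3 A3 by (simp add: s_def)
    have d0A: "d0 = A - 1" using sA A3 by (simp add: d0_def)
    have G12: "G = 1 \<or> G = 2" using hG B3 by linarith
    thus ?thesis
    proof
      assume G1: "G = 1"
      let ?p = "mon (1,0,0) :: 'k poly3" and ?q = "mon (0,0,1) :: 'k poly3" and ?y = "mon (0,1,0) :: 'k poly3"
      have g0: "mon (A,0,0) \<in> gen_ideal ?gs" by (rule gen0[OF hBE' hG' hA])
      have g1: "mon (0,3,0) - mon (2,0,1) \<in> gen_ideal ?gs" using gen1[OF hBE' hG' hA] B3 G1 by simp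
      have g2: "mon (0,0,A) \<in> gen_ideal ?gs" using gen2[OF hBE' hG' hA] B3 by simp
      have g3: "mon (A-2,2,0) \<in> gen_ideal ?gs" using gen3[OF hBE' hG' hA] B3 G1 by simp
      have fs: "Sd ?gs (3 * ?y - 2 * ?p - ?q) (A - 1) (?p ^ u * ?y ^ j * ?q ^ k)" if "u + j + k = A" for u j k
      proof (rule family_surj[OF homog_mon homog_mon homog_mon A3 _ _ _ _ that])
        show "?p ^ A \<in> gen_ideal ?gs" using g0 by (simp add: mon_pow)
        show "?q ^ A \<in> gen_ideal ?gs" using g2 by (simp add: mon_pow)
        show "?y ^ 3 - ?p ^ 2 * ?q \<in> gen_ideal ?gs" using g1 by (simp add: mon_pow mon_mult numeral_2_eq_2 numeral_3_eq_3)
        show "?p ^ (A - 2) * ?y ^ 2 \<in> gen_ideal ?gs" using g3 by (simp add: mon_pow mon_mult numeral_2_eq_2 numeral_3_eq_3)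
      qed simp_all
      show ?thesis
      proof (rule wlp_abstract[OF _ art _ nd s2])
        show "homog 1 (3 * ?y - 2 * ?p - ?q)"
          using homog_mult[OF homog_numeral homog_mon[of "(0,1,0)" 1]] homog_mult[OF homog_numeral homog_mon[of "(1,0,0)" 1]]
          by (intro homog_diff homog_mon) simp_all
        fix g :: "'k poly3" assume "homog (Suc d0) g"
        thus "Sd ?gs (3 * ?y - 2 * ?p - ?q) d0 g"
          using surj_from_mons[of A ?gs "3 * ?y - 2 * ?p - ?q" d0 g] fs d0A A3
          by (simp add: mon_pow mon_mult numeral_2_eq_2 numeral_3_eq_3)
      qed
    next
      assume G2: "G = 2"
      let ?p = "mon (0,0,1) :: 'k poly3" and ?q = "mon (1,0,0) :: 'k poly3" and ?y = "mon (0,1,0) :: 'k poly3"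
      have g0: "mon (A,0,0) \<in> gen_ideal ?gs" by (rule gen0[OF hBE' hG' hA])
      have g1: "mon (0,3,0) - mon (1,0,2) \<in> gen_ideal ?gs" using gen1[OF hBE' hG' hA] B3 G2 by simp
      have g2: "mon (0,0,A) \<in> gen_ideal ?gs" using gen2[OF hBE' hG' hA] B3 by simp
      have g4: "mon (0,2,A-2) \<in> gen_ideal ?gs" using gen4[OF hBE' hG' hA] B3 G2 by simp
      have fs: "Sd ?gs (3 * ?y - 2 * ?p - ?q) (A - 1) (?p ^ u * ?y ^ j * ?q ^ k)" if "u + j + k = A" for u j k
      proof (rule family_surj[OF homog_mon homog_mon homog_mon A3 _ _ _ _ that])
        show "?p ^ A \<in> gen_ideal ?gs" using g2 by (simp add: mon_pow)
        show "?q ^ A \<in> gen_ideal ?gs" using g0 by (simp add: mon_pow)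
        show "?y ^ 3 - ?p ^ 2 * ?q \<in> gen_ideal ?gs" using g1 by (simp add: mon_pow mon_mult numeral_2_eq_2 numeral_3_eq_3)
        show "?p ^ (A - 2) * ?y ^ 2 \<in> gen_ideal ?gs" using g4 by (simp add: mon_pow mon_mult numeral_2_eq_2 numeral_3_eq_3)
      qed simp_all
      show ?thesis
      proof (rule wlp_abstract[OF _ art _ nd s2])
        show "homog 1 (3 * ?y - 2 * ?p - ?q)"
          using homog_mult[OF homog_numeral homog_mon[of "(0,1,0)" 1]] homog_mult[OF homog_numeral homog_mon[of "(0,0,1)" 1]]
          by (intro homog_diff homog_mon) simp_all
        fix g :: "'k poly3" assume hg: "homog (Suc d0) g"
        have "Sd ?gs (3 * ?y - 2 * ?p - ?q) (A - 1) (mon (i,j,k))" if "i + j + k = A" for i j k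
          using fs[of k j i] that by (simp add: mon_pow mon_mult add.commute add.left_commute)
        thus "Sd ?gs (3 * ?y - 2 * ?p - ?q) d0 g"
          using surj_from_mons[of A ?gs "3 * ?y - 2 * ?p - ?q" d0 g] hg d0A A3 by simp
      qed
    qed
  next
    case nfam: False
    show ?thesis
    proof (rule wlp_abstract[OF homog_Lyx art _ nd s2])
      fix g :: "'k poly3" assume hg: "homog (Suc d0) g"
      from ca nfam consider
        "B + C \<le> Suc d0 + 1 + BE" "B + C \<le> Suc d0 + 1 + G" |
        "B + C \<le> Suc d0 + 1 + BE" "B + C \<le> Suc d0 + 1 + 2 * G" "A + 2 * G \<le> Suc d0 + BE + 1" "G < BE"
        by blast
      thus "Sd ?gs Lyx d0 g"
      proof cases
        case 1 thus ?thesis using surj_T1[OF hBE' hG' hA _ _ hg] by blast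
      next
        case 2 thus ?thesis using surj_T2[OF hBE' hG' hA _ _ _ _ hg] by blast
      qed
    qed
  qed
qed



theorem corollary3p10:
  fixes a b c \<beta> \<gamma> :: int
  assumes "a \<ge> c" and "c \<ge> 2"
    and "1 \<le> \<beta>" and "\<beta> \<le> b - 1"
    and "max 1 (b - a + 1) \<le> \<gamma>" and "\<gamma> \<le> min (b - 1) (c - 1)"
    and "a \<ge> 2 * b + c - 6 \<or> (a \<ge> b + c - 2 \<and> 1 \<le> \<beta> \<and> \<beta> \<le> a - b - c + 5)"
  shows "has_WLP ([varX ^ nat a,
                   varY ^ nat b - varX ^ nat (b - \<gamma>) * varZ ^ nat \<gamma>,
                   varZ ^ nat c,
                   varX ^ nat (a - b + \<gamma>) * varY ^ nat (b - \<beta>),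
                   varY ^ nat (b - \<beta>) * varZ ^ nat (c - \<gamma>)] :: 'k::field_char_0 poly3 list)"
proof -
  define A where "A = nat a"
  define B where "B = nat b"
  define C where "C = nat c"
  define BE where "BE = nat \<beta>"
  define G where "G = nat \<gamma>"
  have g1: "1 \<le> \<gamma>" "b - a + 1 \<le> \<gamma>" using assms(5) by auto
  have g2: "\<gamma> \<le> b - 1" "\<gamma> \<le> c - 1" using assms(6) by auto
  have e1: "nat (b - \<gamma>) = B - G" "nat (a - b + \<gamma>) = A + G - B" "nat (b - \<beta>) = B - BE" "nat (c - \<gamma>) = C - G"
    using assms g1 g2 by (simp_all add: A_def B_def C_def BE_def G_def nat_diff_distrib' nat_add_distrib)
  have l: "([varX ^ nat a, varY ^ nat b - varX ^ nat (b - \<gamma>) * varZ ^ nat \<gamma>, varZ ^ nat c,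
            varX ^ nat (a - b + \<gamma>) * varY ^ nat (b - \<beta>), varY ^ nat (b - \<beta>) * varZ ^ nat (c - \<gamma>)] :: 'k poly3 list)
         = gens A B C BE G"
    unfolding e1 by (simp add: gens_def varX_pow varY_pow varZ_pow mon_mult A_def B_def C_def G_def)
  have h: "C \<le> A" "2 \<le> C" "1 \<le> BE" "BE < B" "1 \<le> G" "G < B" "G < C" "B < A + G"
    using assms g1 g2 unfolding A_def B_def C_def BE_def G_def by linarith+
  have ab: "2 * B + C \<le> A + 6 \<or> (B + C \<le> A + 2 \<and> BE + B + C \<le> A + 5)"
    using assms(7) assms(2,3) g1 g2 unfolding A_def B_def C_def BE_def G_def by linarith
  show ?thesis unfolding l by (rule wlp_nat[OF h(1-7) h(8) ab])
qed


end
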